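(* Let $I\subseteq\mathbb{R}$ be an open interval (possibly unbounded), $\Sigma=I\times\mathbb{R}$, and let $F=(P,Q)\in C^1(\Sigma,\mathbb{R}^2)$ be non-singular. If every level set $\{(x,y)\in\Sigma: P(x,y)=c\}$, $c\in\mathbb{R}$, is connected (or every level set $\{(x,y)\in\Sigma: Q(x,y)=c\}$, $c\in\mathbb{R}$, is connected), then $F$ is injective.
   Context: $F$ is non-singular if its Jacobian determinant $d_F=P_xQ_y-P_yQ_x$ is nonzero at every point of $\Sigma$. *)

theory Defs
  imports "HOL-Analysis.Analysis"
begin

definition strip :: "real set \<Rightarrow> (real \<times> real) set" where
  "strip I = I \<times> (UNIV :: real set)"

definition C1_on :: "(real \<times> real) set \<Rightarrow> (real \<times> real \<Rightarrow> real)
    \<Rightarrow> (real \<times> real \<Rightarrow> real \<times> real \<Rightarrow> real) \<Rightarrow> bool" where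
  "C1_on S f f' \<longleftrightarrow>
     (\<forall>z\<in>S. (f has_derivative f' z) (at z)) \<and>
     continuous_on S (\<lambda>z. f' z (1, 0)) \<and>
     continuous_on S (\<lambda>z. f' z (0, 1))"

definition jac_det :: "(real \<times> real \<Rightarrow> real \<times> real \<Rightarrow> real)
    \<Rightarrow> (real \<times> real \<Rightarrow> real \<times> real \<Rightarrow> real) \<Rightarrow> real \<times> real \<Rightarrow> real" where
  "jac_det P' Q' z = P' z (1, 0) * Q' z (0, 1) - P' z (0, 1) * Q' z (1, 0)"

end

theory Submission imports Defs "HOL-Analysis.Analysis" begin
lemma sec_unique:
  fixes X :: "'a::metric_space set" and q :: "'a \<Rightarrow> real"
  assumes S: "connected S" and cg: "continuous_on S g" and cd: "continuous_on S d"
    and sg: "\<forall>t\<in>S. g t \<in> X \<and> q (g t) = t" and sd: "\<forall>t\<in>S. d t \<in> X \<and> q (d t) = t"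
    and s0: "s0 \<in> S" "g s0 = d s0"
    and inj_loc: "\<forall>x\<in>X. \<exists>V. open V \<and> x \<in> V \<and> inj_on q (V \<inter> X)"
    and t: "t \<in> S"
  shows "g t = d t"
proof -
  let ?E = "{t \<in> S. dist (g t) (d t) = 0}"
  have cl: "closedin (top_of_set S) ?E"
    by (intro continuous_closedin_preimage_constant continuous_on_dist cg cd)
  have op: "openin (top_of_set S) ?E"
    unfolding openin_euclidean_subtopology_iff
  proof (intro conjI ballI)
    show "?E \<subseteq> S" by auto
    fix t assume "t \<in> ?E"
    hence tS: "t \<in> S" and eq: "g t = d t" by auto
    obtain V where V: "open V" "g t \<in> V" "inj_on q (V \<inter> X)" using inj_loc sg tS by blast
    obtain r where r: "r > 0" "ball (g t) r \<subseteq> V" using V open_contains_ball by blast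
    obtain d1 where d1: "d1 > 0" "\<forall>x'\<in>S. dist x' t < d1 \<longrightarrow> dist (g x') (g t) < r"
      using cg tS r(1) unfolding continuous_on_iff by blast
    obtain d2 where d2: "d2 > 0" "\<forall>x'\<in>S. dist x' t < d2 \<longrightarrow> dist (d x') (d t) < r"
      using cd tS r(1) unfolding continuous_on_iff by blast
    show "\<exists>e>0. \<forall>x'\<in>S. dist x' t < e \<longrightarrow> x' \<in> ?E"
    proof (intro exI[of _ "min d1 d2"] conjI ballI impI)
      show "min d1 d2 > 0" using d1 d2 by simp
      fix x' assume x': "x' \<in> S" "dist x' t < min d1 d2"
      have "dist (g t) (g x') < r" using d1 x' by (auto simp: dist_commute)
      hence "g x' \<in> V" using r(2) by auto
      moreover have "dist (g t) (d x') < r" using d2 x' eq by (auto simp: dist_commute)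
      hence "d x' \<in> V" using r(2) by auto
      ultimately have "g x' = d x'" using V(3) sg sd x'(1) unfolding inj_on_def by auto
      thus "x' \<in> ?E" using x' by simp
    qed
  qed
  have "?E = {} \<or> ?E = S" using S cl op unfolding connected_clopen by blast
  moreover have "s0 \<in> ?E" using s0 by simp
  ultimately show ?thesis using t by auto
qed

lemma loc_sections_inj:
  fixes X :: "'a::metric_space set" and q :: "'a \<Rightarrow> real"
  assumes conn: "connected X"
    and inj_loc: "\<forall>x\<in>X. \<exists>V. open V \<and> x \<in> V \<and> inj_on q (V \<inter> X)"
    and sec: "\<forall>x\<in>X. \<exists>e>0. \<exists>h. continuous_on (cball (q x) e) h \<and>
        (\<forall>t\<in>cball (q x) e. h t \<in> X \<and> q (h t) = t) \<and> h (q x) = x \<and>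
        (\<exists>V. open V \<and> x \<in> V \<and> V \<inter> X \<subseteq> h ` ball (q x) e)"
  shows "inj_on q X"
proof (rule inj_onI)
  fix a y assume aX: "a \<in> X" and yX: "y \<in> X" and qeq: "q a = q y"
  define t0 where "t0 = q a"
  define G where "G = {x \<in> X. \<exists>S g. compact S \<and> connected S \<and> t0 \<in> S \<and> q x \<in> S \<and>
     continuous_on S g \<and> (\<forall>t\<in>S. g t \<in> X \<and> q (g t) = t) \<and> g t0 = a \<and> g (q x) = x}"
  have glue: "h t \<in> G"
    if x: "x \<in> X" and e: "e > 0" and ch: "continuous_on (cball (q x) e) h"
      and hs: "\<forall>t\<in>cball (q x) e. h t \<in> X \<and> q (h t) = t"
      and S: "compact S" "connected S" "t0 \<in> S" and cg: "continuous_on S g"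
      and gs: "\<forall>t\<in>S. g t \<in> X \<and> q (g t) = t" and g0: "g t0 = a"
      and t1: "t1 \<in> S" "t1 \<in> cball (q x) e" "g t1 = h t1"
      and t: "t \<in> cball (q x) e"
    for x e h S g t1 t
  proof -
    define C where "C = cball (q x) e"
    have connSC: "connected (S \<inter> C)"
      using S(2) unfolding C_def is_interval_connected_1[symmetric]
      by (intro is_interval_Int) (auto simp: is_interval_connected_1)
    have agree: "g s = h s" if "s \<in> S \<inter> C" for s
      by (rule sec_unique[OF connSC _ _ _ _ _ _ inj_loc that, of g h t1])
         (use cg ch gs hs t1 in \<open>auto simp: C_def intro: continuous_on_subset\<close>)
    define g' where "g' = (\<lambda>s. if s \<in> S then g s else h s)"
    have "continuous_on (S \<union> C) g'"
    proof (rule continuous_on_closed_Un)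
      show "closed S" using S(1) by (rule compact_imp_closed)
      show "closed C" unfolding C_def by simp
      show "continuous_on S g'" using cg by (rule continuous_on_eq) (auto simp: g'_def)
      show "continuous_on C g'" using ch unfolding C_def[symmetric]
        by (rule continuous_on_eq) (use agree in \<open>auto simp: g'_def\<close>)
    qed
    moreover have "compact (S \<union> C)" using S(1) unfolding C_def by (intro compact_Un) auto
    moreover have "connected (S \<union> C)"
      using S(2) t1 unfolding C_def by (intro connected_Un) auto
    moreover have "\<forall>s\<in>S \<union> C. g' s \<in> X \<and> q (g' s) = s"
      using gs hs unfolding g'_def C_def by auto
    moreover have "g' t0 = a" using g0 S(3) by (simp add: g'_def)
    moreover have "g' t = h t" using agree t unfolding g'_def C_def by auto
    moreover have "q (h t) = t" "h t \<in> X" using hs t by auto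
    moreover have "t \<in> C" using t C_def by simp
    ultimately show ?thesis unfolding G_def using S(3)
      by (intro CollectI conjI exI[of _ "S \<union> C"] exI[of _ g']) auto
  qed
  have aG: "a \<in> G" unfolding G_def using aX
    by (intro CollectI conjI exI[of _ "{t0}"] exI[of _ "\<lambda>_. a"]) (auto simp: t0_def)
  have opG: "openin (top_of_set X) G"
    unfolding openin_subopen[of _ G]
  proof
    fix x assume xG: "x \<in> G"
    then obtain S g where Sg: "compact S" "connected S" "t0 \<in> S" "q x \<in> S"
      "continuous_on S g" "\<forall>t\<in>S. g t \<in> X \<and> q (g t) = t" "g t0 = a" "g (q x) = x"
      and xX: "x \<in> X" unfolding G_def by blast
    obtain e h V where e: "e > 0" "continuous_on (cball (q x) e) h"
      "\<forall>t\<in>cball (q x) e. h t \<in> X \<and> q (h t) = t" "h (q x) = x"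
      "open V" "x \<in> V" "V \<inter> X \<subseteq> h ` ball (q x) e"
      using sec xX by blast
    have "V \<inter> X \<subseteq> G"
    proof
      fix y assume "y \<in> V \<inter> X"
      then obtain t where t: "t \<in> ball (q x) e" "y = h t" using e(7) by blast
      have qc: "q x \<in> cball (q x) e" using e(1) by simp
      have gq: "g (q x) = h (q x)" using e(4) Sg(8) by simp
      have tc: "t \<in> cball (q x) e" using t(1) by simp
      have "h t \<in> G" by (rule glue[OF xX e(1,2,3) Sg(1,2,3,5,6,7) Sg(4) qc gq tc])
      thus "y \<in> G" using t(2) by simp
    qed
    thus "\<exists>T. openin (top_of_set X) T \<and> x \<in> T \<and> T \<subseteq> G"
      proof (intro exI[of _ "V \<inter> X"] conjI)
        have "openin (top_of_set X) (X \<inter> V)" using e(5) by (rule openin_open_Int)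
        thus "openin (top_of_set X) (V \<inter> X)" by (simp only: Int_commute)
        show "x \<in> V \<inter> X" using e(6) xX by blast
      qed simp
  qed
  have clG: "closedin (top_of_set X) G"
    unfolding closedin_def
  proof
    show "G \<subseteq> topspace (top_of_set X)" unfolding G_def by auto
    show "openin (top_of_set X) (topspace (top_of_set X) - G)"
      unfolding openin_subopen[of _ "topspace (top_of_set X) - G"]
    proof
      fix x assume "x \<in> topspace (top_of_set X) - G"
      hence xX: "x \<in> X" and xG: "x \<notin> G" by auto
      obtain e h V where e: "e > 0" "continuous_on (cball (q x) e) h"
        "\<forall>t\<in>cball (q x) e. h t \<in> X \<and> q (h t) = t" "h (q x) = x"
        "open V" "x \<in> V" "V \<inter> X \<subseteq> h ` ball (q x) e"
        using sec xX by blast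
      have "V \<inter> X \<subseteq> X - G"
      proof
        fix y assume yV: "y \<in> V \<inter> X"
        then obtain t where t: "t \<in> ball (q x) e" "y = h t" using e(7) by blast
        have "y \<notin> G"
        proof
          assume "y \<in> G"
          then obtain S g where Sg: "compact S" "connected S" "t0 \<in> S" "q y \<in> S"
            "continuous_on S g" "\<forall>t\<in>S. g t \<in> X \<and> q (g t) = t" "g t0 = a" "g (q y) = y"
            unfolding G_def by blast
          have qy: "q y = t" using e(3) t by auto
          have tS: "t \<in> S" using Sg(4) qy by simp
          have tc: "t \<in> cball (q x) e" using t(1) by simp
          have gt: "g t = h t" using Sg(8) qy t(2) by simp
          have qc: "q x \<in> cball (q x) e" using e(1) by simp
          have "h (q x) \<in> G"
            by (rule glue[OF xX e(1,2,3) Sg(1,2,3,5,6,7) tS tc gt qc])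
          thus False using e(4) xG by simp
        qed
        thus "y \<in> X - G" using yV by auto
      qed
      thus "\<exists>T. openin (top_of_set X) T \<and> x \<in> T \<and> T \<subseteq> topspace (top_of_set X) - G"
        proof (intro exI[of _ "V \<inter> X"] conjI)
        have "openin (top_of_set X) (X \<inter> V)" using e(5) by (rule openin_open_Int)
        thus "openin (top_of_set X) (V \<inter> X)" by (simp only: Int_commute)
        show "x \<in> V \<inter> X" using e(6) xX by blast
      qed simp
    qed
  qed
  have "G = {} \<or> G = X" using conn opG clG unfolding connected_clopen by blast
  hence "G = X" using aG by blast
  with yX have "y \<in> G" by simp
  then obtain S g where "g t0 = a" "g (q y) = y" unfolding G_def by blast
  thus "a = y" using qeq unfolding t0_def by metis
qed

definition M :: "real \<Rightarrow> real \<Rightarrow> real \<Rightarrow> real \<Rightarrow> ((real \<times> real) \<Rightarrow>\<^sub>L (real \<times> real))" where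
  "M a b c d = Blinfun (\<lambda>v. (a * fst v + b * snd v, c * fst v + d * snd v))"

lemma bl_M: "bounded_linear (\<lambda>v::real\<times>real. (a * fst v + b * snd v, c * fst v + d * snd v))"
proof -
  have "linear (\<lambda>v::real\<times>real. (a * fst v + b * snd v, c * fst v + d * snd v))"
    by (rule linearI) (auto simp: algebra_simps)
  thus ?thesis by (simp add: linear_conv_bounded_linear)
qed

lemma M_apply [simp]: "blinfun_apply (M a b c d) v = (a * fst v + b * snd v, c * fst v + d * snd v)"
  unfolding M_def by (simp add: bounded_linear_Blinfun_apply[OF bl_M])

lemma M_decomp: "M a b c d = a *\<^sub>R M 1 0 0 0 + b *\<^sub>R M 0 1 0 0 + c *\<^sub>R M 0 0 1 0 + d *\<^sub>R M 0 0 0 1"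
  by (rule blinfun_eqI) (simp add: blinfun.add_left blinfun.scaleR_left)

lemma lin_decomp:
  fixes f :: "real \<times> real \<Rightarrow> real"
  assumes "bounded_linear f"
  shows "f v = fst v * f (1, 0) + snd v * f (0, 1)"
proof -
  interpret linear f using assms by (rule bounded_linear.linear)
  have "v = fst v *\<^sub>R (1, 0) + snd v *\<^sub>R (0, 1)" by (cases v) simp
  hence "f v = f (fst v *\<^sub>R (1, 0) + snd v *\<^sub>R (0, 1))" by simp
  also have "\<dots> = fst v * f (1, 0) + snd v * f (0, 1)" by (simp only: add scale real_scaleR_def)
  finally show ?thesis .
qed

lemma dist_Pair_same: "dist (c::real, t::real) (c, s) = dist t s"
  by (simp add: dist_Pair_Pair)

lemma local_inv:
  fixes P Q :: "real \<times> real \<Rightarrow> real"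
  assumes U: "open U" and PC: "C1_on U P P'" and QC: "C1_on U Q Q'"
    and ns: "\<forall>z\<in>U. jac_det P' Q' z \<noteq> 0" and x0: "x0 \<in> U"
  obtains U' V g where "open U'" "U' \<subseteq> U" "x0 \<in> U'" "open V" "(P x0, Q x0) \<in> V"
    "homeomorphism U' V (\<lambda>z. (P z, Q z)) g"
proof -
  define F'' where "F'' z = M (P' z (1,0)) (P' z (0,1)) (Q' z (1,0)) (Q' z (0,1))" for z
  have der: "((\<lambda>z. (P z, Q z)) has_derivative blinfun_apply (F'' z)) (at z)" if z: "z \<in> U" for z
  proof -
    have dP: "(P has_derivative P' z) (at z)" and dQ: "(Q has_derivative Q' z) (at z)"
      using PC QC z unfolding C1_on_def by auto
    have eq: "(\<lambda>h. (P' z h, Q' z h)) = blinfun_apply (F'' z)"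
    proof (rule ext)
      fix h
      have "P' z h = fst h * P' z (1, 0) + snd h * P' z (0, 1)"
        by (rule lin_decomp[OF has_derivative_bounded_linear[OF dP]])
      moreover have "Q' z h = fst h * Q' z (1, 0) + snd h * Q' z (0, 1)"
        by (rule lin_decomp[OF has_derivative_bounded_linear[OF dQ]])
      ultimately show "(P' z h, Q' z h) = blinfun_apply (F'' z) h"
        by (simp only: F''_def M_apply mult.commute)
    qed
    show ?thesis using has_derivative_Pair[OF dP dQ] unfolding eq .
  qed
  have cont: "continuous_on U F''"
  proof -
    have "F'' = (\<lambda>z. P' z (1,0) *\<^sub>R M 1 0 0 0 + P' z (0,1) *\<^sub>R M 0 1 0 0 +
                     Q' z (1,0) *\<^sub>R M 0 0 1 0 + Q' z (0,1) *\<^sub>R M 0 0 0 1)"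
      unfolding F''_def by (rule ext) (rule M_decomp)
    moreover have "continuous_on U (\<lambda>z. P' z (1,0) *\<^sub>R M 1 0 0 0 + P' z (0,1) *\<^sub>R M 0 1 0 0 +
                     Q' z (1,0) *\<^sub>R M 0 0 1 0 + Q' z (0,1) *\<^sub>R M 0 0 0 1)"
      using PC QC unfolding C1_on_def
      by (intro continuous_on_add continuous_on_scaleR continuous_on_const) auto
    ultimately show ?thesis by simp
  qed
  define p1 where "p1 = P' x0 (1,0)"
  define p2 where "p2 = P' x0 (0,1)"
  define q1 where "q1 = Q' x0 (1,0)"
  define q2 where "q2 = Q' x0 (0,1)"
  define d where "d = p1 * q2 - p2 * q1"
  have d0: "d \<noteq> 0" using ns x0 unfolding d_def p1_def p2_def q1_def q2_def jac_det_def by auto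
  have FM: "F'' x0 = M p1 p2 q1 q2" by (simp add: F''_def p1_def p2_def q1_def q2_def)
  have inv: "M (q2/d) (-p2/d) (-q1/d) (p1/d) o\<^sub>L F'' x0 = id_blinfun"
  proof (rule blinfun_eqI)
    fix v :: "real \<times> real"
    obtain u w where v: "v = (u, w)" by (cases v)
    have e1: "q2 * (p1 * u + p2 * w) - p2 * (q1 * u + q2 * w) = d * u"
      by (simp add: d_def algebra_simps)
    have e2: "p1 * (q1 * u + q2 * w) - q1 * (p1 * u + p2 * w) = d * w"
      by (simp add: d_def algebra_simps)
    have "q2 / d * (p1 * u + p2 * w) + - p2 / d * (q1 * u + q2 * w)
        = (q2 * (p1 * u + p2 * w) - p2 * (q1 * u + q2 * w)) / d"
      by (simp add: diff_divide_distrib)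
    hence r1: "q2 / d * (p1 * u + p2 * w) + - p2 / d * (q1 * u + q2 * w) = u"
      using e1 d0 by simp
    have "- q1 / d * (p1 * u + p2 * w) + p1 / d * (q1 * u + q2 * w)
        = (p1 * (q1 * u + q2 * w) - q1 * (p1 * u + p2 * w)) / d"
      by (simp add: diff_divide_distrib)
    hence r2: "- q1 / d * (p1 * u + p2 * w) + p1 / d * (q1 * u + q2 * w) = w"
      using e2 d0 by simp
    show "blinfun_apply (M (q2/d) (-p2/d) (-q1/d) (p1/d) o\<^sub>L F'' x0) v = blinfun_apply id_blinfun v"
      unfolding v blinfun_apply_blinfun_compose FM M_apply fst_conv snd_conv id_blinfun.rep_eq id_apply
      using r1 r2 by (simp only:)
  qed
  show ?thesis
  proof (rule inverse_function_theorem[OF U der cont x0 inv])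
    fix U' V g g'
    assume "open U'" "U' \<subseteq> U" "x0 \<in> U'" "open V" "(P x0, Q x0) \<in> V"
      "homeomorphism U' V (\<lambda>z. (P z, Q z)) g"
    thus ?thesis by (rule that)
  qed
qed

lemma main_P:
  fixes P Q :: "real \<times> real \<Rightarrow> real"
  assumes S: "open S" and PC: "C1_on S P P'" and QC: "C1_on S Q Q'"
    and ns: "\<forall>z\<in>S. jac_det P' Q' z \<noteq> 0"
    and lev: "\<forall>c. connected {z \<in> S. P z = c}"
  shows "inj_on (\<lambda>z. (P z, Q z)) S"
proof (rule inj_onI)
  fix x y assume xS: "x \<in> S" and yS: "y \<in> S" and Fxy: "(P x, Q x) = (P y, Q y)"
  define c where "c = P x"
  define L where "L = {z \<in> S. P z = c}"
  have injL: "inj_on Q L"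
  proof (rule loc_sections_inj)
    show "connected L" unfolding L_def using lev by blast
    show "\<forall>x\<in>L. \<exists>V. open V \<and> x \<in> V \<and> inj_on Q (V \<inter> L)"
    proof
      fix x assume xL: "x \<in> L"
      have xS0: "x \<in> S" using xL unfolding L_def by simp
      obtain U' V g where U': "open U'" "U' \<subseteq> S" "x \<in> U'" "open V" "(P x, Q x) \<in> V"
        "homeomorphism U' V (\<lambda>z. (P z, Q z)) g"
        by (rule local_inv[OF S PC QC ns xS0])
      have "inj_on Q (U' \<inter> L)"
      proof (rule inj_onI)
        fix z w assume z: "z \<in> U' \<inter> L" and w: "w \<in> U' \<inter> L" and "Q z = Q w"
        hence Fzw: "(P z, Q z) = (P w, Q w)" using z w unfolding L_def by simp
        have gz: "g (P z, Q z) = z" using homeomorphism_apply1[OF U'(6), of z] z by simp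
        have gw: "g (P w, Q w) = w" using homeomorphism_apply1[OF U'(6), of w] w by simp
        show "z = w" using gz gw Fzw by metis
      qed
      thus "\<exists>V. open V \<and> x \<in> V \<and> inj_on Q (V \<inter> L)" using U' by blast
    qed
    show "\<forall>x\<in>L. \<exists>e>0. \<exists>h. continuous_on (cball (Q x) e) h \<and>
        (\<forall>t\<in>cball (Q x) e. h t \<in> L \<and> Q (h t) = t) \<and> h (Q x) = x \<and>
        (\<exists>V. open V \<and> x \<in> V \<and> V \<inter> L \<subseteq> h ` ball (Q x) e)"
    proof
      fix x assume xL: "x \<in> L"
      hence xS': "x \<in> S" and Px: "P x = c" unfolding L_def by auto
      obtain U' V g where U': "open U'" "U' \<subseteq> S" "x \<in> U'" "open V" "(P x, Q x) \<in> V"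
        "homeomorphism U' V (\<lambda>z. (P z, Q z)) g"
        by (rule local_inv[OF S PC QC ns xS'])
      obtain e where e: "e > 0" "cball (P x, Q x) e \<subseteq> V"
        using U'(4,5) open_contains_cball by blast
      define h where "h t = g (c, t)" for t
      have inV: "(c, t) \<in> V" if "t \<in> cball (Q x) e" for t
      proof -
        have "dist (P x, Q x) (c, t) \<le> e" using that Px by (simp add: dist_Pair_same)
        thus ?thesis using e(2) by auto
      qed
      have hF: "P (h t) = c \<and> Q (h t) = t" if "t \<in> cball (Q x) e" for t
        using homeomorphism_apply2[OF U'(6) inV[OF that]] unfolding h_def by simp
      have hU: "h t \<in> U'" if "t \<in> cball (Q x) e" for t
        using inV[OF that] U'(6) unfolding h_def homeomorphism_def by blast
      have ch: "continuous_on (cball (Q x) e) h"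
        unfolding h_def
        by (rule continuous_on_compose2[OF homeomorphism_cont2[OF U'(6)]])
           (auto intro!: continuous_intros inV)
      have hx: "h (Q x) = x"
        using homeomorphism_apply1[OF U'(6) U'(3)] Px unfolding h_def by simp
      define W where "W = (\<lambda>z. (P z, Q z)) -` ball (P x, Q x) e \<inter> U'"
      have oW: "open W" unfolding W_def
        using homeomorphism_cont1[OF U'(6)] U'(1) continuous_on_open_vimage by blast
      have xW: "x \<in> W" unfolding W_def using U'(3) e(1) by simp
      have WL: "W \<inter> L \<subseteq> h ` ball (Q x) e"
      proof
        fix y assume y: "y \<in> W \<inter> L"
        hence yU: "y \<in> U'" and Py: "P y = c" and yb: "(P y, Q y) \<in> ball (P x, Q x) e"
          unfolding W_def L_def by auto
        have "dist (Q x) (Q y) < e" using yb Py Px by (simp add: dist_Pair_same)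
        hence qb: "Q y \<in> ball (Q x) e" by simp
        have "h (Q y) = y"
          using homeomorphism_apply1[OF U'(6) yU] Py unfolding h_def by simp
        thus "y \<in> h ` ball (Q x) e" using qb by (metis imageI)
      qed
      show "\<exists>e>0. \<exists>h. continuous_on (cball (Q x) e) h \<and>
        (\<forall>t\<in>cball (Q x) e. h t \<in> L \<and> Q (h t) = t) \<and> h (Q x) = x \<and>
        (\<exists>V. open V \<and> x \<in> V \<and> V \<inter> L \<subseteq> h ` ball (Q x) e)"
      proof (intro exI[of _ e] conjI exI[of _ h] ballI exI[of _ W])
        show "h t \<in> L" if "t \<in> cball (Q x) e" for t
          using hF[OF that] hU[OF that] U'(2) unfolding L_def by auto
        show "Q (h t) = t" if "t \<in> cball (Q x) e" for t using hF[OF that] by simp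
      qed (use e(1) ch hx oW xW WL in auto)
    qed
  qed
  have "x \<in> L" "y \<in> L" using xS yS Fxy unfolding L_def c_def by auto
  moreover have "Q x = Q y" using Fxy by simp
  ultimately show "x = y" using injL unfolding inj_on_def by blast
qed

theorem lemma1:
  fixes I :: "real set"
    and P Q :: "real \<times> real \<Rightarrow> real"
    and P' Q' :: "real \<times> real \<Rightarrow> real \<times> real \<Rightarrow> real"
  assumes I_interval: "is_interval I" and I_open: "open I" and I_ne: "I \<noteq> {}"
    and P_C1: "C1_on (strip I) P P'"
    and Q_C1: "C1_on (strip I) Q Q'"
    and nonsing: "\<forall>z\<in>strip I. jac_det P' Q' z \<noteq> 0"
    and levels: "(\<forall>c. connected {z \<in> strip I. P z = c}) \<or>
                 (\<forall>c. connected {z \<in> strip I. Q z = c})"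
  shows "inj_on (\<lambda>z. (P z, Q z)) (strip I)"
proof -
  have S: "open (strip I)" unfolding strip_def using I_open by (intro open_Times) auto
  from levels show ?thesis
  proof
    assume "\<forall>c. connected {z \<in> strip I. P z = c}"
    thus ?thesis by (rule main_P[OF S P_C1 Q_C1 nonsing])
  next
    assume lq: "\<forall>c. connected {z \<in> strip I. Q z = c}"
    have "\<forall>z\<in>strip I. jac_det Q' P' z \<noteq> 0"
      using nonsing unfolding jac_det_def by (auto simp: algebra_simps)
    hence "inj_on (\<lambda>z. (Q z, P z)) (strip I)" by (rule main_P[OF S Q_C1 P_C1 _ lq])
    thus ?thesis unfolding inj_on_def by auto
  qed
qed

end
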